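(* Let $m\in\mathbb{N}$ and let $\alpha_1,\dots,\alpha_n\in\mathbb{C}$ be $m$-th roots of unity. Let $q_1$ be the smallest prime factor of $m$, and let $k\in\mathbb{N}$ satisfy $q_1>\max\{n,k\}$. Then $\alpha_1^k+\alpha_2^k+\cdots+\alpha_n^k\neq 0$.
   Context: $\mathbb{N}$ denotes the set of positive integers. The $\alpha_i$ need not be distinct. *)

theory Defs
  imports Complex_Main "HOL-Computational_Algebra.Primes"
begin

end

theory Submission
  imports Defs "Berlekamp_Zassenhaus.Poly_Mod" "HOL-Number_Theory.Cong"
begin

definition ev :: "int poly \<Rightarrow> complex \<Rightarrow> complex" where
  "ev p z = poly (map_poly of_int p) z"

lemma ev_mult[simp]: "ev (p * q) z = ev p z * ev q z"
  by (simp add: ev_def of_int_poly_hom.hom_mult)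
lemma ev_add[simp]: "ev (p + q) z = ev p z + ev q z"
  by (simp add: ev_def of_int_poly_hom.hom_add)
lemma ev_diff[simp]: "ev (p - q) z = ev p z - ev q z"
  by (simp add: ev_def of_int_poly_hom.hom_minus)
lemma ev_power[simp]: "ev (p ^ n) z = ev p z ^ n"
  by (simp add: ev_def of_int_poly_hom.hom_power)
lemma ev_monom[simp]: "ev (monom c n) z = of_int c * z ^ n"
  by (simp add: ev_def map_poly_monom poly_monom)
lemma ev_const[simp]: "ev [:c:] z = of_int c"
  using ev_monom[of c 0 z] by (simp add: monom_0)
lemma ev_smult[simp]: "ev (smult c p) z = of_int c * ev p z"
proof -
  have "smult c p = [:c:] * p" by simp
  thus ?thesis by (metis ev_mult ev_const)
qed
lemma ev_0[simp]: "ev 0 z = 0" by (simp add: ev_def)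
lemma ev_1[simp]: "ev 1 z = 1" by (simp add: ev_def)
lemma ev_pcompose[simp]: "ev (pcompose p q) z = ev p (ev q z)"
  by (simp add: ev_def of_int_hom.map_poly_pcompose poly_pcompose)

lemma ev_primitive_part: "ev p z = 0 \<Longrightarrow> ev (primitive_part p) z = 0"
proof (cases "p = 0")
  case False
  assume h: "ev p z = 0"
  have "p = smult (content p) (primitive_part p)" by simp
  hence "ev p z = of_int (content p) * ev (primitive_part p) z"
    by (metis ev_smult)
  with h False show ?thesis by simp
qed simp

lemma ev_normalize: "ev p z = 0 \<Longrightarrow> ev (normalize p) z = 0"
proof -
  assume h: "ev p z = 0"
  have "p = normalize p * unit_factor p" by simp
  hence e: "ev p z = ev (normalize p) z * ev (unit_factor p) z" by (metis ev_mult)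
  show ?thesis
  proof (cases "p = 0")
    case False
    have "unit_factor p = [:unit_factor (lead_coeff p):]"
      by (simp add: unit_factor_poly_def monom_0)
    moreover have "unit_factor (lead_coeff p) \<noteq> 0" using False by (simp add: sgn_if)
    ultimately have "ev (unit_factor p) z \<noteq> 0" by simp
    with e h show ?thesis by simp
  qed simp
qed

lemma ev_gcd_aux: "ev p z = 0 \<Longrightarrow> ev q z = 0 \<Longrightarrow> ev (gcd_poly_code_aux p q) z = 0"
proof (induction p q rule: gcd_poly_code_aux.induct)
  case (1 p q)
  show ?case
  proof (cases "q = 0")
    case True
    thus ?thesis using 1 by (subst gcd_poly_code_aux.simps) (simp add: ev_normalize)
  next
    case False
    obtain a Q where aQ: "a \<noteq> 0" "smult a p = q * Q + pseudo_mod p q"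
      using pseudo_mod(1)[OF False, of p] by blast
    have "ev (smult a p) z = ev (q * Q + pseudo_mod p q) z" using aQ by simp
    hence "ev (pseudo_mod p q) z = 0" using 1(2,3) by simp
    hence "ev (primitive_part (pseudo_mod p q)) z = 0" by (rule ev_primitive_part)
    hence "ev (gcd_poly_code_aux q (primitive_part (pseudo_mod p q))) z = 0"
      using 1 False by blast
    thus ?thesis using False by (subst gcd_poly_code_aux.simps) simp
  qed
qed

lemma ev_gcd: "ev p z = 0 \<Longrightarrow> ev q z = 0 \<Longrightarrow> ev (gcd p q) z = 0"
  unfolding gcd_poly_code gcd_poly_code_def
  by (auto simp: ev_normalize ev_gcd_aux ev_primitive_part)

lemma freshman_int:
  fixes x y :: "'a :: comm_ring_1"
  assumes r: "prime r"
  shows "\<exists>c. (x + y) ^ r = x ^ r + y ^ r + of_nat r * c"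
proof -
  have r0: "r > 0" using r prime_gt_0_nat by blast
  have "(x + y) ^ r = (\<Sum>k\<le>r. of_nat (r choose k) * x ^ k * y ^ (r - k))"
    by (rule binomial_ring)
  also have "{..r} = insert 0 (insert r {1..<r})" using r0 by auto
  also have "(\<Sum>k\<in>insert 0 (insert r {1..<r}). of_nat (r choose k) * x ^ k * y ^ (r - k))
     = y ^ r + (x ^ r + (\<Sum>k\<in>{1..<r}. of_nat (r choose k) * x ^ k * y ^ (r - k)))"
    using r0 by (subst sum.insert; auto)+
  also have "(\<Sum>k\<in>{1..<r}. of_nat (r choose k) * x ^ k * y ^ (r - k))
     = of_nat r * (\<Sum>k\<in>{1..<r}. of_nat ((r choose k) div r) * x ^ k * y ^ (r - k))"
  proof -
    have "\<And>k. k \<in> {1..<r} \<Longrightarrow> (r choose k) = r * ((r choose k) div r)"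
      using dvd_choose_prime[OF _ _ _ r] by (metis atLeastLessThan_iff dvd_mult_div_cancel not_one_le_zero r0 less_not_refl2)
    hence "\<And>k. k \<in> {1..<r} \<Longrightarrow> (of_nat (r choose k) :: 'a) = of_nat r * of_nat ((r choose k) div r)"
      by (metis of_nat_mult)
    thus ?thesis by (simp add: sum_distrib_left mult.assoc)
  qed
  finally show ?thesis by (metis add.commute add.left_commute)
qed

lemma fermat_int:
  assumes r: "prime (r::nat)"
  shows "int r dvd (a::int) ^ r - a"
proof -
  have nat_case: "int r dvd int b ^ r - int b" for b :: nat
  proof (induction b)
    case 0 thus ?case using r prime_gt_0_nat by (simp add: zero_power)
  next
    case (Suc b)
    obtain c :: int where c: "(int b + 1) ^ r = int b ^ r + 1 ^ r + of_nat r * c"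
      using freshman_int[OF r] by blast
    have "int (Suc b) ^ r - int (Suc b) = (int b ^ r - int b) + of_nat r * c"
      using c by (simp add: algebra_simps)
    thus ?case using Suc.IH by (metis dvd_add dvd_triv_left)
  qed
  define b where "b = nat (a mod int r)"
  have rpos: "int r > 0" using r prime_gt_0_nat by simp
  have ab: "[a = int b] (mod int r)" unfolding b_def using rpos
    by (simp add: cong_def)
  have "[a ^ r = int b ^ r] (mod int r)" by (rule cong_pow[OF ab])
  moreover have "[int b ^ r = int b] (mod int r)"
    using nat_case[of b] by (simp add: cong_iff_dvd_diff cong_sym_eq)
  ultimately have "[a ^ r = a] (mod int r)"
    using ab by (meson cong_sym cong_trans)
  thus ?thesis by (simp add: cong_iff_dvd_diff)
qed

definition rdiv :: "int \<Rightarrow> int poly \<Rightarrow> bool" where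
  "rdiv r p \<longleftrightarrow> (\<exists>Q. p = smult r Q)"

lemma rdiv_add: "rdiv r p \<Longrightarrow> rdiv r q \<Longrightarrow> rdiv r (p + q)"
  unfolding rdiv_def by (metis smult_add_right)
lemma rdiv_mult: "rdiv r p \<Longrightarrow> rdiv r (p * q)"
  unfolding rdiv_def by (metis mult_smult_left)
lemma rdiv_smult: "rdiv r (smult r q)"
  unfolding rdiv_def by blast

lemma frobenius:
  assumes r: "prime (r::nat)"
  shows "rdiv (int r) (F ^ r - pcompose F (monom 1 r))"
proof (induction F)
  case 0
  thus ?case using r prime_gt_0_nat by (simp add: rdiv_def zero_power)
next
  case (pCons a G)
  obtain c where c: "(([:a:] + monom 1 1 * G)) ^ r = [:a:] ^ r + (monom 1 1 * G) ^ r + of_nat r * c"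
    using freshman_int[OF r] by blast
  have e1: "pCons a G = [:a:] + monom 1 1 * G"
    by (simp add: monom_Suc monom_0 pCons_one)
  have e2: "pcompose (pCons a G) (monom 1 r) = [:a:] + monom 1 r * pcompose G (monom 1 r)"
    by (simp add: pcompose_pCons)
  have e3: "(monom 1 1 * G) ^ r = monom 1 r * G ^ r"
    by (simp add: power_mult_distrib monom_power)
  obtain Q where Q: "G ^ r - pcompose G (monom 1 r) = smult (int r) Q"
    using pCons.IH unfolding rdiv_def by blast
  obtain d where d: "a ^ r - a = int r * d" using fermat_int[OF r, of a] by (auto elim: dvdE)
  have t1: "[:a ^ r:] - [:a:] = smult (int r) [:d:]"
  proof -
    have "[:a ^ r:] - [:a:] = [:a ^ r - a:]" by (simp add: poly_eq_iff coeff_pCons split: nat.split)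
    thus ?thesis using d by simp
  qed
  have t2: "(of_nat r :: int poly) * c = smult (int r) c" by (simp add: of_nat_poly)
  have "pCons a G ^ r - pcompose (pCons a G) (monom 1 r)
      = ([:a:] + monom 1 1 * G) ^ r - ([:a:] + monom 1 r * pcompose G (monom 1 r))"
    using e1 e2 by simp
  also have "\<dots> = [:a ^ r:] + monom 1 r * G ^ r + of_nat r * c - [:a:] - monom 1 r * pcompose G (monom 1 r)"
    unfolding c e3 poly_const_pow by (simp add: algebra_simps)
  also have "\<dots> = ([:a ^ r:] - [:a:]) + monom 1 r * (G ^ r - pcompose G (monom 1 r)) + of_nat r * c"
    by (simp add: algebra_simps)
  also have "\<dots> = smult (int r) ([:d:] + monom 1 r * Q + c)"
    unfolding t1 t2 Q by (simp add: smult_add_right)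
  finally show ?case unfolding rdiv_def by blast
qed

lemma coeff_const_pos: "i > 0 \<Longrightarrow> coeff [:c:] i = 0"
  by (cases i) simp_all

lemma P_facts:
  assumes "m > 0"
  shows "degree ([:-1:] + monom (1::int) m) = m" "lead_coeff ([:-1:] + monom (1::int) m) = 1"
proof -
  have d: "degree ([:-1::int:]) < degree (monom (1::int) m)" using assms by (simp add: degree_monom_eq)
  show "degree ([:-1:] + monom (1::int) m) = m"
    using degree_add_eq_right[OF d] by (simp add: degree_monom_eq)
  thus "lead_coeff ([:-1:] + monom (1::int) m) = 1" using assms by (simp add: coeff_const_pos)
qed

lemma ev_P: "ev ([:-1:] + monom 1 m) z = z ^ m - 1" by simp

lemma L3:
  assumes m: "m > 0" and z: "z ^ m = 1" and r: "prime (r::int)" and u: "ev u z = 0"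
    and hi: "\<forall>i>0. r dvd coeff u i"
  shows "r dvd coeff u 0"
proof (rule ccontr)
  assume nd: "\<not> r dvd coeff u 0"
  define P :: "int poly" where "P = [:-1:] + monom 1 m"
  have evP: "ev P z = 0" using z by (simp add: P_def)
  define g where "g = gcd u P"
  have gz: "ev g z = 0" unfolding g_def using u evP by (rule ev_gcd)
  obtain h where Ph: "P = g * h" unfolding g_def by (meson gcd_dvd2 dvdE)
  have "lead_coeff g * lead_coeff h = 1" using P_facts[OF m] Ph by (metis P_def lead_coeff_mult)
  hence lc: "lead_coeff g = 1 \<or> lead_coeff g = -1" by (auto simp: zmult_eq_1_iff)
  define g' where "g' = (if lead_coeff g = 1 then g else - g)"
  have mon: "lead_coeff g' = 1" using lc by (auto simp: g'_def)
  have gu: "g' dvd u" unfolding g'_def g_def by auto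
  have gz': "ev g' z = 0" using gz by (simp add: g'_def ev_def of_int_poly_hom.hom_uminus)
  have deg: "degree g' > 0"
  proof (rule ccontr)
    assume "\<not> degree g' > 0"
    hence "degree g' = 0" by simp
    hence "g' = [:lead_coeff g':]" by (metis degree_eq_zeroE coeff_pCons_0 )
    hence "g' = [:1:]" using mon by simp
    with gz' show False by simp
  qed
  have r1: "r > 1" using r prime_gt_1_int by blast
  have Mpu: "poly_mod.Mp r u = [:coeff u 0 mod r:]"
  proof (rule poly_eqI)
    fix i
    show "coeff (poly_mod.Mp r u) i = coeff [:coeff u 0 mod r:] i"
      using hi by (cases i) (auto simp: poly_mod.Mp_coeff poly_mod.M_def)
  qed
  have Mpu0: "poly_mod.Mp r (poly_mod.Mp r u) \<noteq> 0"
    using nd by (simp add: Mpu poly_mod.Mp_const_poly dvd_eq_mod_eq_0)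
  obtain w where uw: "u = g' * w" using gu by (auto elim: dvdE)
  have "poly_mod.dvdm r g' (poly_mod.Mp r u)"
    unfolding poly_mod.dvdm_Mp unfolding poly_mod.dvdm_def using uw by blast
  from poly_mod.dvdm_imp_degree_le[OF this _ Mpu0 r1] mon
  have "degree g' \<le> degree (poly_mod.Mp r u)" by simp
  with deg Mpu show False by simp
qed

lemma L4:
  assumes m: "m > 0" and w: "\<omega> ^ m = 1" and r: "prime (r::nat)" and nd: "\<not> r dvd m"
    and FK: "F * K = [:-1:] + monom 1 m" and F: "ev F \<omega> = 0"
  shows "ev F (\<omega> ^ r) = 0"
proof (rule ccontr)
  assume ne: "ev F (\<omega> ^ r) \<noteq> 0"
  define \<theta> where "\<theta> = \<omega> ^ r"
  have \<theta>m: "\<theta> ^ m = 1" unfolding \<theta>_def using w by (metis power_mult mult.commute power_one)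
  have "ev (F * K) \<theta> = 0" using \<theta>m FK by simp
  hence K: "ev K \<theta> = 0" using ne \<theta>_def by simp
  have "pderiv ([:-1:] + monom (1::int) m) = monom (int m) (m - 1)"
    by (simp add: pderiv_add pderiv_monom pderiv_pCons)
  hence "monom (int m) (m - 1) = F * pderiv K + K * pderiv F" using FK pderiv_mult[of F K] by metis
  hence "ev (monom (int m) (m - 1)) \<theta> = ev (F * pderiv K + K * pderiv F) \<theta>" by simp
  hence e1: "of_nat m * \<theta> ^ (m - 1) = ev F \<theta> * ev (pderiv K) \<theta>" using K by simp
  obtain Q where Q: "F ^ r - pcompose F (monom 1 r) = smult (int r) Q"
    using frobenius[OF r, of F] unfolding rdiv_def by blast
  have r0: "r > 0" using r prime_gt_0_nat by blast
  have "ev (F ^ r - pcompose F (monom 1 r)) \<omega> = of_nat r * ev Q \<omega>" using Q by simp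
  hence e2': "0 ^ r - ev F \<theta> = of_nat r * ev Q \<omega>" using F unfolding \<theta>_def by simp
  have "(0::complex) ^ r = 0" using r0 by simp
  hence e2: "ev F \<theta> = - (of_nat r * ev Q \<omega>)" using e2' by (metis diff_0 minus_minus)
  define W where "W = Q * pcompose (pderiv K) (monom 1 r) * monom 1 r"
  have evW: "ev W \<omega> = ev Q \<omega> * ev (pderiv K) \<theta> * \<theta>" by (simp add: W_def \<theta>_def)
  have "(of_nat m :: complex) = of_nat m * (\<theta> ^ (m - 1) * \<theta>)"
    using \<theta>m m by (metis mult.right_neutral power_minus_mult)
  also have "\<dots> = of_nat m * \<theta> ^ (m - 1) * \<theta>" by (simp add: mult.assoc)
  also have "\<dots> = - (of_nat r * ev W \<omega>)" unfolding e1 e2 evW by (simp add: algebra_simps)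
  finally have em: "(of_nat m :: complex) = - (of_nat r * ev W \<omega>)" .
  define u where "u = [:int m:] + smult (int r) W"
  have "ev u \<omega> = 0" unfolding u_def using em by simp
  moreover have "\<forall>i>0. int r dvd coeff u i" unfolding u_def by (simp add: coeff_const_pos)
  ultimately have "int r dvd coeff u 0" using L3[OF m w] r by (simp add: prime_nat_iff_prime)
  hence "int r dvd int m" unfolding u_def by (simp add: dvd_add_left_iff)
  with nd show False by simp
qed

lemma L5:
  assumes m: "m > 0" and w: "\<omega> ^ m = 1" and r: "prime (r::nat)" and nd: "\<not> r dvd m"
    and h: "ev h \<omega> = 0"
  shows "ev h (\<omega> ^ r) = 0"
proof -
  define P :: "int poly" where "P = [:-1:] + monom 1 m"
  define F where "F = gcd h P"
  have "ev P \<omega> = 0" using w by (simp add: P_def)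
  hence F0: "ev F \<omega> = 0" unfolding F_def using ev_gcd[OF h] by blast
  obtain K where "P = F * K" unfolding F_def by (meson gcd_dvd2 dvdE)
  hence FK: "F * K = [:-1:] + monom 1 m" using P_def by simp
  have "ev F (\<omega> ^ r) = 0" using L4[OF m w r nd FK F0] .
  moreover obtain H where "h = F * H" unfolding F_def by (meson gcd_dvd1 dvdE)
  ultimately show ?thesis by (metis ev_mult mult_zero_left)
qed

lemma L6:
  assumes m: "m > 0" and w: "\<omega> ^ m = 1" and h: "ev h \<omega> = 0"
  shows "algebraic_semidom_class.coprime j m \<Longrightarrow> j > 0 \<Longrightarrow> ev h (\<omega> ^ j) = 0"
proof (induction j rule: less_induct)
  case (less j)
  show ?case
  proof (cases "j = 1")
    case True thus ?thesis using h by simp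
  next
    case False
    then obtain r where r: "prime r" "r dvd j" using prime_factor_nat by blast
    obtain j' where j: "j = r * j'" using r by (auto elim: dvdE)
    have r2: "r \<ge> 2" using r prime_ge_2_nat by blast
    have j'0: "j' > 0" using less(3) j by simp
    have j'l: "j' < j" using j r2 j'0 by simp
    have cj': "algebraic_semidom_class.coprime j' m" using less(2) j by simp
    have nd: "\<not> r dvd m"
      using coprime_common_divisor[OF less(2) r(2)] r(1) not_prime_unit by blast
    have "ev h (\<omega> ^ j') = 0" using less(1)[OF j'l cj' j'0] .
    moreover have "(\<omega> ^ j') ^ m = 1" using w by (metis power_mult mult.commute power_one)
    ultimately have "ev h ((\<omega> ^ j') ^ r) = 0" using L5[OF m _ r(1) nd] by blast
    thus ?thesis using j by (simp add: power_mult mult.commute)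
  qed
qed

definition wr :: "nat \<Rightarrow> complex" where "wr n = cis (2 * pi / real n)"

lemma w_pow: "wr n ^ k = cis (2 * pi * real k / real n)"
  by (simp add: wr_def DeMoivre mult_ac)

lemma w_n: "n > 0 \<Longrightarrow> wr n ^ n = 1"
  by (simp add: w_pow)

lemma w_ne0[simp]: "wr n \<noteq> 0" by (simp add: wr_def)

lemma w_mod: "n > 0 \<Longrightarrow> wr n ^ k = wr n ^ (k mod n)"
proof -
  assume n: "n > 0"
  have "wr n ^ k = wr n ^ (n * (k div n) + k mod n)" by simp
  also have "\<dots> = (wr n ^ n) ^ (k div n) * wr n ^ (k mod n)" by (simp only: power_add power_mult)
  finally show ?thesis using w_n[OF n] by simp
qed

lemma w_pow_eq_1: "n > 0 \<Longrightarrow> wr n ^ k = 1 \<longleftrightarrow> n dvd k"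
proof -
  assume n: "n > 0"
  have inj: "inj_on (\<lambda>k. cis (2 * pi * real k / real n)) {..<n}"
    using bij_betw_roots_unity[OF n] by (simp add: bij_betw_def)
  show ?thesis
  proof
    assume "wr n ^ k = 1"
    hence "wr n ^ (k mod n) = wr n ^ 0" using w_mod[OF n, of k] by simp
    hence "cis (2 * pi * real (k mod n) / real n) = cis (2 * pi * real 0 / real n)"
      unfolding w_pow .
    hence "k mod n = 0" using inj_onD[OF inj] n by auto
    thus "n dvd k" by auto
  next
    assume "n dvd k"
    then obtain c where "k = n * c" by auto
    thus "wr n ^ k = 1" using w_n[OF n] by (simp add: power_mult)
  qed
qed

lemma w_mult: "n > 0 \<Longrightarrow> q > 0 \<Longrightarrow> wr (q * n) ^ q = wr n"
proof -
  assume n: "n > 0" and q: "q > 0"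
  have e: "2 * pi * real q / real (q * n) = 2 * pi / real n" using n q by (simp add: field_simps)
  have "wr (q * n) ^ q = cis (2 * pi * real q / real (q * n))" by (rule w_pow)
  also have "\<dots> = wr n" unfolding e wr_def ..
  finally show ?thesis .
qed

lemma w_roots: "n > 0 \<Longrightarrow> z ^ n = 1 \<Longrightarrow> \<exists>a<n. z = wr n ^ a"
proof -
  assume n: "n > 0" and z: "z ^ n = 1"
  have "z \<in> (\<lambda>k. cis (2 * pi * real k / real n)) ` {..<n}"
    using bij_betw_roots_unity[OF n] z by (simp add: bij_betw_def)
  thus ?thesis by (auto simp: w_pow)
qed

lemma geom:
  assumes q: "q > 0"
  shows "(\<Sum>s<q. wr q ^ (s * d)) = (if q dvd d then of_nat q else 0)"
proof (cases "q dvd d")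
  case True
  hence "\<And>s. wr q ^ (s * d) = 1" using w_pow_eq_1[OF q] by simp
  thus ?thesis using True by simp
next
  case False
  define x where "x = wr q ^ d"
  have x1: "x \<noteq> 1" using w_pow_eq_1[OF q] False by (simp add: x_def)
  have xq: "x ^ q = 1" unfolding x_def using w_n[OF q] by (metis power_mult power_mult_distrib mult.commute power_one)
  have "(\<Sum>s<q. wr q ^ (s * d)) = (\<Sum>s<q. x ^ s)" unfolding x_def
    by (intro sum.cong refl) (metis power_mult mult.commute)
  also have "\<dots> = (x ^ q - 1) / (x - 1)" using x1 by (rule geometric_sum)
  finally show ?thesis using xq False by simp
qed

lemma dft:
  assumes q: "q > 0"
    and Y: "\<forall>s. 0 < s \<and> s < q \<longrightarrow> (\<Sum>t<q. wr q ^ (s * t) * y t) = 0"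
    and t0: "t0 < q" "y t0 = 0"
  shows "\<forall>t<q. y t = 0"
proof -
  define Yf where "Yf s = (\<Sum>t<q. wr q ^ (s * t) * y t)" for s
  have key: "of_nat q * y t = Yf 0" if t: "t < q" for t
  proof -
    have "(\<Sum>s<q. wr q ^ (s * (q - t)) * Yf s)
        = (\<Sum>s<q. \<Sum>t'<q. y t' * wr q ^ (s * (q - t + t')))"
      unfolding Yf_def sum_distrib_left
    proof (intro sum.cong refl)
      fix s t'
      show "wr q ^ (s * (q - t)) * (wr q ^ (s * t') * y t') = y t' * wr q ^ (s * (q - t + t'))"
        by (simp add: add_mult_distrib2 power_add)
    qed
    also have "\<dots> = (\<Sum>t'<q. y t' * (\<Sum>s<q. wr q ^ (s * (q - t + t'))))"
      by (subst sum.swap) (simp add: sum_distrib_left)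
    also have "\<dots> = (\<Sum>t'<q. if t' = t then y t' * of_nat q else 0)"
    proof (rule sum.cong[OF refl])
      fix t' assume "t' \<in> {..<q}"
      hence t': "t' < q" by simp
      have "q dvd (q - t + t') \<longleftrightarrow> t' = t"
      proof
        assume d: "q dvd q - t + t'"
        have "q - t + t' > 0" using t by simp
        moreover have "q - t + t' < 2 * q" using t t' by simp
        moreover obtain c where c: "q - t + t' = q * c" using d by (auto elim: dvdE)
        ultimately have c0: "c > 0" and "q * c < q * 2" by (auto simp: mult.commute intro: Nat.gr0I)
        hence "c < 2" using mult_less_cancel1 by blast
        hence "c = 1" using c0 by simp
        hence "q - t + t' = q" using c by simp
        thus "t' = t" using t by simp
      qed (use t in simp)
      thus "y t' * (\<Sum>s<q. wr q ^ (s * (q - t + t'))) = (if t' = t then y t' * of_nat q else 0)"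
        using geom[OF q] by simp
    qed
    also have "\<dots> = y t * of_nat q" using t by simp
    finally have A: "(\<Sum>s<q. wr q ^ (s * (q - t)) * Yf s) = y t * of_nat q" .
    have "(\<Sum>s<q. wr q ^ (s * (q - t)) * Yf s) = (\<Sum>s\<in>{0}. wr q ^ (s * (q - t)) * Yf s)"
      by (rule sum.mono_neutral_right) (use q Y in \<open>auto simp: Yf_def\<close>)
    hence "(\<Sum>s<q. wr q ^ (s * (q - t)) * Yf s) = Yf 0" by simp
    with A show ?thesis by (simp add: mult.commute)
  qed
  have "Yf 0 = 0" using key[OF t0(1)] t0(2) by simp
  thus ?thesis using key q by simp
qed

abbreviation cp :: "nat \<Rightarrow> nat \<Rightarrow> bool" where "cp a b \<equiv> algebraic_semidom_class.coprime a b"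

lemma cop_add: "cp (n + k * m) m \<longleftrightarrow> cp n m"
  by (metis coprime_iff_gcd_eq_1 gcd_add_mult add.commute gcd.commute)

lemma sum_list_classes:
  assumes q: "(q::nat) > 0"
  shows "(\<Sum>b\<leftarrow>bs. f b) = (\<Sum>t<q. \<Sum>b\<leftarrow>filter (\<lambda>b. b mod q = t) bs. (f b :: complex))"
proof (induction bs)
  case Nil show ?case by simp
next
  case (Cons x xs)
  have "(\<Sum>t<q. \<Sum>b\<leftarrow>filter (\<lambda>b. b mod q = t) (x # xs). f b)
      = (\<Sum>t<q. (if x mod q = t then f x else 0) + (\<Sum>b\<leftarrow>filter (\<lambda>b. b mod q = t) xs. f b))"
    by (intro sum.cong refl) simp
  also have "\<dots> = f x + (\<Sum>t<q. \<Sum>b\<leftarrow>filter (\<lambda>b. b mod q = t) xs. f b)"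
    using q by (simp add: sum.distrib sum.delta')
  finally show ?case using Cons by simp
qed

lemma class_pow: "q > 0 \<Longrightarrow> wr q ^ (s * b) = wr q ^ (s * (b mod q))"
  by (metis w_mod mod_mult_right_eq)

definition Ssum :: "nat \<Rightarrow> nat \<Rightarrow> nat list \<Rightarrow> complex" where
  "Ssum m j bs = (\<Sum>b\<leftarrow>bs. wr m ^ (j * b))"

lemma S_shift:
  assumes mm: "m = q * m1" and q: "q > 0" and m1: "m1 > 0"
  shows "Ssum m (j0 + s * m1) bs = (\<Sum>t<q. wr q ^ (s * t) * (\<Sum>b\<leftarrow>filter (\<lambda>b. b mod q = t) bs. wr m ^ (j0 * b)))"
proof -
  have wm: "wr m ^ m1 = wr q" using w_mult[OF q m1] mm by (simp add: mult.commute)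
  have "Ssum m (j0 + s * m1) bs = (\<Sum>b\<leftarrow>bs. wr m ^ (j0 * b) * wr q ^ (s * b))"
    unfolding Ssum_def
  proof (intro arg_cong[where f = sum_list] map_cong refl)
    fix b
    have "wr m ^ ((j0 + s * m1) * b) = wr m ^ (j0 * b) * (wr m ^ m1) ^ (s * b)"
      by (simp add: algebra_simps power_add flip: power_mult)
    thus "wr m ^ ((j0 + s * m1) * b) = wr m ^ (j0 * b) * wr q ^ (s * b)" using wm by simp
  qed
  also have "\<dots> = (\<Sum>t<q. \<Sum>b\<leftarrow>filter (\<lambda>b. b mod q = t) bs. wr m ^ (j0 * b) * wr q ^ (s * b))"
    by (rule sum_list_classes[OF q])
  also have "\<dots> = (\<Sum>t<q. wr q ^ (s * t) * (\<Sum>b\<leftarrow>filter (\<lambda>b. b mod q = t) bs. wr m ^ (j0 * b)))"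
  proof (intro sum.cong refl)
    fix t
    have "(\<Sum>b\<leftarrow>filter (\<lambda>b. b mod q = t) bs. wr m ^ (j0 * b) * wr q ^ (s * b))
        = (\<Sum>b\<leftarrow>filter (\<lambda>b. b mod q = t) bs. wr m ^ (j0 * b) * wr q ^ (s * t))"
      by (intro arg_cong[where f = sum_list] map_cong refl) (use class_pow[OF q] in auto)
    also have "\<dots> = wr q ^ (s * t) * (\<Sum>b\<leftarrow>filter (\<lambda>b. b mod q = t) bs. wr m ^ (j0 * b))"
      by (simp add: sum_list_mult_const mult.commute)
    finally show "(\<Sum>b\<leftarrow>filter (\<lambda>b. b mod q = t) bs. wr m ^ (j0 * b) * wr q ^ (s * b))
        = wr q ^ (s * t) * (\<Sum>b\<leftarrow>filter (\<lambda>b. b mod q = t) bs. wr m ^ (j0 * b))" .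
  qed
  finally show ?thesis .
qed

lemma Qm:
  "m > 0 \<Longrightarrow> bs \<noteq> [] \<Longrightarrow> (\<forall>q. prime q \<and> q dvd m \<longrightarrow> length bs < q)
   \<Longrightarrow> \<exists>j>0. cp j m \<and> Ssum m j bs \<noteq> 0"
proof (induction m arbitrary: bs rule: less_induct)
  case (less m)
  show ?case
  proof (cases "m = 1")
    case True
    have w1: "wr (Suc 0) = 1" by (simp add: wr_def)
    have "Ssum 1 1 bs = of_nat (length bs)" by (induction bs) (simp_all add: Ssum_def w1)
    thus ?thesis using True less.prems by (intro exI[of _ 1]) auto
  next
    case False
    obtain q where q: "prime q" "q dvd m" using prime_factor_nat False by blast
    obtain m1 where mm: "m = q * m1" using q(2) by (auto elim: dvdE)
    have q2: "q \<ge> 2" using q prime_ge_2_nat by blast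
    have q0: "q > 0" using q2 by simp
    have m1: "m1 > 0" using less.prems(1) mm by (cases m1) auto
    have m1l: "m1 < m" using mm q2 m1 by simp
    have lq: "length bs < q" using less.prems(3) q by blast
    have pr1: "\<forall>q'. prime q' \<and> q' dvd m1 \<longrightarrow> length xs < q'" if "length xs \<le> length bs" for xs
    proof (intro allI impI)
      fix q' assume "prime q' \<and> q' dvd m1"
      hence "prime q'" "q' dvd m" using mm by (auto intro: dvd_trans)
      hence "length bs < q'" using less.prems(3) by blast
      thus "length xs < q'" using that by simp
    qed
    define cls where "cls t = filter (\<lambda>b. b mod q = t) bs" for t
    have "card ((\<lambda>b. b mod q) ` set bs) \<le> length bs"
      by (rule le_trans[OF card_image_le[OF finite_set] card_length])
    hence lt: "card ((\<lambda>b. b mod q) ` set bs) < card {..<q}" using lq by simp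
    have "\<not> {..<q} \<subseteq> (\<lambda>b. b mod q) ` set bs"
    proof (intro notI)
      assume "{..<q} \<subseteq> (\<lambda>b. b mod q) ` set bs"
      hence "card {..<q} \<le> card ((\<lambda>b. b mod q) ` set bs)" by (intro card_mono) auto
      thus False using lt by simp
    qed
    then obtain t0 where t0: "t0 < q" "t0 \<notin> (\<lambda>b. b mod q) ` set bs" by auto
    have cls0: "cls t0 = []" unfolding cls_def filter_empty_conv using t0(2) by auto
    define t1 where "t1 = hd bs mod q"
    have t1q: "t1 < q" using q0 by (simp add: t1_def)
    have cls1: "cls t1 \<noteq> []" unfolding cls_def t1_def filter_empty_conv
      using hd_in_set[OF less.prems(2)] by blast
    have lc: "length (cls t1) \<le> length bs" by (simp add: cls_def)
    define y where "y j0 t = (\<Sum>b\<leftarrow>cls t. wr m ^ (j0 * b))" for j0 t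
    have Yeq: "Ssum m (j0 + s * m1) bs = (\<Sum>t<q. wr q ^ (s * t) * y j0 t)" for j0 s
      using S_shift[OF mm q0 m1] by (simp add: y_def cls_def)
    have wq: "wr m ^ q = wr m1" using w_mult[OF m1 q0] mm by simp
    show ?thesis
    proof (rule ccontr)
      assume "\<not> ?thesis"
      hence H: "\<forall>j>0. cp j m \<longrightarrow> Ssum m j bs = 0" by blast
      have dftapp: "y j0 t1 = 0" if hj: "\<forall>s. 0 < s \<and> s < q \<longrightarrow> cp (j0 + s * m1) m \<and> j0 + s * m1 > 0" for j0
      proof -
        have A: "\<forall>s. 0 < s \<and> s < q \<longrightarrow> (\<Sum>t<q. wr q ^ (s * t) * y j0 t) = 0"
        proof (intro allI impI)
          fix s assume s: "0 < s \<and> s < q"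
          have hj2: "cp (j0 + s * m1) m \<and> j0 + s * m1 > 0" by (rule hj[rule_format, OF s])
          have e: "Ssum m (j0 + s * m1) bs = 0" by (rule H[rule_format, OF conjunct2[OF hj2] conjunct1[OF hj2]])
          show "(\<Sum>t<q. wr q ^ (s * t) * y j0 t) = 0" unfolding Yeq[of j0 s, symmetric] by (rule e)
        qed
        have B: "y j0 t0 = 0" using cls0 by (simp add: y_def)
        have "\<forall>t<q. y j0 t = 0" by (rule dft[OF q0 A t0(1) B])
        thus ?thesis using t1q by blast
      qed
      show False
      proof (cases "q dvd m1")
        case True
        have ne: "map (\<lambda>b. b div q) (cls t1) \<noteq> []" using cls1 by simp
        have "\<forall>q'. prime q' \<and> q' dvd m1 \<longrightarrow> length (map (\<lambda>b. b div q) (cls t1)) < q'"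
          using pr1 lc by simp
        then obtain j where j: "j > 0" "cp j m1" "Ssum m1 j (map (\<lambda>b. b div q) (cls t1)) \<noteq> 0"
          using less.IH[OF m1l m1 ne] by blast
        have cjq: "cp j q" by (rule coprime_divisors[OF dvd_refl True j(2)])
        have "\<forall>s. 0 < s \<and> s < q \<longrightarrow> cp (j + s * m1) m \<and> j + s * m1 > 0"
        proof (intro allI impI conjI)
          fix s assume "0 < s \<and> s < q"
          have c1: "cp (j + s * m1) m1" using j(2) cop_add[of j s m1] by (simp add: mult.commute)
          obtain c where c: "m1 = q * c" using True by (auto elim: dvdE)
          have c2: "cp (j + (s * c) * q) q" using cop_add[of j "s * c" q] cjq by simp
          hence c2': "cp (j + s * m1) q" using c by (simp add: mult.commute mult.left_commute)
          show "cp (j + s * m1) m" using c1 c2' mm by simp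
          show "j + s * m1 > 0" using j(1) by simp
        qed
        hence y0: "y j t1 = 0" by (rule dftapp)
        have "y j t1 = wr m ^ (j * t1) * Ssum m1 j (map (\<lambda>b. b div q) (cls t1))"
        proof -
          have "y j t1 = (\<Sum>b\<leftarrow>cls t1. wr m ^ (j * t1) * wr m1 ^ (j * (b div q)))"
            unfolding y_def
          proof (intro arg_cong[where f = sum_list] map_cong refl)
            fix b assume "b \<in> set (cls t1)"
            hence bm: "b mod q = t1" by (simp add: cls_def)
            have bq: "b = q * (b div q) + t1" using div_mult_mod_eq[of b q] bm by (simp add: mult.commute)
            have "wr m ^ (j * b) = wr m ^ (j * (q * (b div q) + t1))" using bq by simp
            also have "\<dots> = wr m ^ (j * t1 + q * (j * (b div q)))" by (simp add: algebra_simps)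
            also have "\<dots> = wr m ^ (j * t1) * (wr m ^ q) ^ (j * (b div q))" by (simp only: power_add power_mult)
            finally have "wr m ^ (j * b) = wr m ^ (j * t1) * (wr m ^ q) ^ (j * (b div q))" .
            thus "wr m ^ (j * b) = wr m ^ (j * t1) * wr m1 ^ (j * (b div q))" using wq by simp
          qed
          also have "\<dots> = wr m ^ (j * t1) * Ssum m1 j (map (\<lambda>b. b div q) (cls t1))"
            by (simp add: Ssum_def sum_list_const_mult o_def)
          finally show ?thesis .
        qed
        with y0 j(3) show False by simp
      next
        case False
        have "\<forall>q'. prime q' \<and> q' dvd m1 \<longrightarrow> length (cls t1) < q'"
          by (rule pr1[OF lc])
        then obtain j1 where j1: "j1 > 0" "cp j1 m1" "Ssum m1 j1 (cls t1) \<noteq> 0"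
          using less.IH[OF m1l m1 cls1] by blast
        have cq: "cp q m1" using prime_imp_coprime[OF q(1) False] .
        have "\<forall>s. 0 < s \<and> s < q \<longrightarrow> cp (q * j1 + s * m1) m \<and> q * j1 + s * m1 > 0"
        proof (intro allI impI conjI)
          fix s assume s: "0 < s \<and> s < q"
          have c1: "cp (q * j1 + s * m1) m1" using cq j1(2) cop_add[of "q * j1" s m1] by simp
          have "\<not> q dvd q * j1 + s * m1"
          proof
            assume "q dvd q * j1 + s * m1"
            hence "q dvd s * m1" by (simp add: dvd_add_right_iff)
            hence "q dvd s \<or> q dvd m1" using q(1) prime_dvd_mult_iff by blast
            moreover have "\<not> q dvd s" using s by (auto dest: dvd_imp_le)
            ultimately show False using False by blast
          qed
          hence "cp q (q * j1 + s * m1)" by (rule prime_imp_coprime[OF q(1)])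
          hence c2: "cp (q * j1 + s * m1) q" by (subst Rings.coprime_commute)
          show "cp (q * j1 + s * m1) m" using c1 c2 mm by simp
          show "q * j1 + s * m1 > 0" using j1(1) q0 by simp
        qed
        hence y0: "y (q * j1) t1 = 0" by (rule dftapp)
        have "y (q * j1) t1 = Ssum m1 j1 (cls t1)"
          unfolding y_def Ssum_def
        proof (intro arg_cong[where f = sum_list] map_cong refl)
          fix b
          show "wr m ^ (q * j1 * b) = wr m1 ^ (j1 * b)" using wq by (simp add: power_mult mult.assoc)
        qed
        with y0 j1(3) show False by simp
      qed
    qed
  qed
qed


lemma ev_sum_list: "ev (\<Sum>x\<leftarrow>xs. f x) z = (\<Sum>x\<leftarrow>xs. ev (f x) z)"
  by (induction xs) simp_all

theorem lemma2p3:
  fixes m n k :: nat and \<alpha> :: "nat \<Rightarrow> complex"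
  assumes "m > 0" and "n > 0" and "k > 0"
    and "\<forall>i\<in>{1..n}. \<alpha> i ^ m = 1"
    and "Min (prime_factors m) > max n k"
  shows "(\<Sum>i=1..n. \<alpha> i ^ k) \<noteq> 0"
proof (cases "m = 1")
  case True
  hence "\<forall>i\<in>{1..n}. \<alpha> i = 1" using assms(4) by simp
  hence "(\<Sum>i=1..n. \<alpha> i ^ k) = (\<Sum>i=1..n. 1)" by (intro sum.cong refl) simp
  thus ?thesis using assms(2) by simp
next
  case False
  have m: "m > 0" by (rule assms(1))
  have pf: "\<forall>q. prime q \<and> q dvd m \<longrightarrow> length (map (\<lambda>i. k * a i) [1..<n+1]) < q" for a :: "nat \<Rightarrow> nat"
  proof (intro allI impI)
    fix q assume q: "prime q \<and> q dvd m"
    hence qin: "q \<in> prime_factors m" using m by (auto simp: in_prime_factors_iff)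
    have "Min (prime_factors m) \<le> q" using qin by (intro Min_le) simp_all
    thus "length (map (\<lambda>i. k * a i) [1..<n+1]) < q" using assms(5) by simp
  qed
  define a where "a i = (SOME c. \<alpha> i = wr m ^ c)" for i
  have a: "\<alpha> i = wr m ^ a i" if "i \<in> {1..n}" for i
  proof -
    have "\<exists>c. \<alpha> i = wr m ^ c" using w_roots[OF m] assms(4) that by blast
    thus ?thesis unfolding a_def by (rule someI_ex)
  qed
  define bs where "bs = map (\<lambda>i. k * a i) [1..<n+1]"
  have bsne: "bs \<noteq> []" using assms(2) by (simp add: bs_def)
  have setu: "set [1..<n+1] = {1..n}" by auto
  have Sj: "Ssum m j bs = (\<Sum>i=1..n. wr m ^ (j * (k * a i)))" for j
    by (simp only: Ssum_def bs_def map_map o_def interv_sum_list_conv_sum_set_nat setu)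
  have "(\<Sum>i=1..n. \<alpha> i ^ k) = (\<Sum>i=1..n. wr m ^ (1 * (k * a i)))"
  proof (intro sum.cong refl)
    fix i assume "i \<in> {1..n}"
    thus "\<alpha> i ^ k = wr m ^ (1 * (k * a i))" using a by (simp add: power_mult[symmetric] mult.commute)
  qed
  hence sum_eq: "(\<Sum>i=1..n. \<alpha> i ^ k) = Ssum m 1 bs" using Sj[of 1] by simp
  define h :: "int poly" where "h = (\<Sum>b\<leftarrow>bs. monom 1 b)"
  have evh: "ev h z = (\<Sum>b\<leftarrow>bs. z ^ b)" for z
    unfolding h_def ev_sum_list by simp
  have evhj: "ev h (wr m ^ j) = Ssum m j bs" for j
    unfolding evh Ssum_def by (simp add: power_mult)
  show ?thesis
  proof
    assume H0: "(\<Sum>i=1..n. \<alpha> i ^ k) = 0"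
    have e0: "ev h (wr m) = 0" using evhj[of 1] H0 sum_eq by simp
    have wm: "wr m ^ m = 1" by (rule w_n[OF m])
    obtain j where j: "j > 0" "cp j m" "Ssum m j bs \<noteq> 0"
      using Qm[OF m bsne] pf[of a] unfolding bs_def by blast
    have "ev h (wr m ^ j) = 0" by (rule L6[OF m wm e0 j(2) j(1)])
    with j(3) evhj[of j] show False by simp
  qed
qed

end
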